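(* Let $\nu\ge3$ be a square-free integer with $\nu\equiv2$ or $3\pmod 4$. Define $x_0=0$ and $x_{n+1}=\sqrt{\nu+x_n}$. Let $n\ge1$. For any maximal ideal $\mathcal{P}\subseteq\mathbb{Z}[x_n]$ with $\mathcal{P}\cap\mathbb{Z}=2\mathbb{Z}$, the localization of $\mathbb{Z}[x_n]$ at $\mathcal{P}$ is a discrete valuation ring.
   Context: Square roots are the positive real ones. *)

theory Defs
  imports "HOL-Algebra.Algebra" "HOL-Computational_Algebra.Polynomial"
    "HOL-Computational_Algebra.Squarefree"
begin

fun nested_sqrt :: "int \<Rightarrow> nat \<Rightarrow> real" where
  "nested_sqrt \<nu> 0 = 0"
| "nested_sqrt \<nu> (Suc n) = sqrt (of_int \<nu> + nested_sqrt \<nu> n)"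

definition int_adjoin :: "real \<Rightarrow> real set" where
  "int_adjoin a = {poly (map_poly of_int p) a | p :: int poly. True}"

definition real_subring :: "real set \<Rightarrow> real ring" where
  "real_subring S = \<lparr>carrier = S, monoid.mult = (*), one = 1, ring.zero = 0, ring.add = (+)\<rparr>"

text \<open>Localization of a subring A of the reals (a domain) at a prime ideal P,
  realized inside the fraction field: the ring of fractions a/b with a in A, b in A - P.\<close>
definition localization_at :: "real set \<Rightarrow> real set \<Rightarrow> real set" where
  "localization_at A P = {a / b | a b. a \<in> A \<and> b \<in> A - P}"

definition DVR :: "'a ring \<Rightarrow> bool" where
  "DVR R \<longleftrightarrow> principal_domain R \<and> \<not> field R \<and> (\<exists>!M. maximalideal M R)"

end

theory Submission
  imports Defs
begin


definition ev :: "int poly \<Rightarrow> real \<Rightarrow> real" where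
  "ev p t = poly (map_poly of_int p) t"

lemma ev_pCons[simp]: "ev (pCons a p) t = of_int a + t * ev p t"
  by (simp add: ev_def map_poly_pCons)

lemma ev_0[simp]: "ev 0 t = 0" by (simp add: ev_def)

lemma ev_add[simp]: "ev (p + q) t = ev p t + ev q t"
  by (induct p q rule: poly_induct2) (auto simp: algebra_simps)

lemma ev_smult[simp]: "ev (smult a p) t = of_int a * ev p t"
  by (induct p) (auto simp: algebra_simps)

lemma ev_mult[simp]: "ev (p * q) t = ev p t * ev q t"
  by (induct p) (auto simp: algebra_simps)

lemma ev_const[simp]: "ev [:a:] t = of_int a" by simp

lemma ev_one[simp]: "ev 1 t = 1" by (simp add: one_pCons)

lemma ev_uminus[simp]: "ev (- p) t = - ev p t"
  by (induct p) (auto simp: algebra_simps)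

lemma ev_power[simp]: "ev (p ^ n) t = ev p t ^ n"
  by (induct n) auto

lemma ev_pcompose: "ev (pcompose p q) t = ev p (ev q t)"
  by (induct p) (auto simp: pcompose_pCons)

lemma ev_int: "ev p (of_int z) = of_int (poly p z)"
  by (induct p) auto

lemma pcompose_power_left': "pcompose (p ^ n) r = (pcompose p r) ^ n"
  for p r :: "int poly"
  by (induct n) (auto simp: pcompose_mult pcompose_1)

fun fpoly :: "int \<Rightarrow> nat \<Rightarrow> int poly" where
  "fpoly \<nu> 0 = [:0,1:]"
| "fpoly \<nu> (Suc k) = pcompose (fpoly \<nu> k) [:-\<nu>,0,1:]"

lemma nested_nonneg: "\<nu> \<ge> 0 \<Longrightarrow> nested_sqrt \<nu> k \<ge> 0"
  by (induct k) auto

lemma fpoly_root: assumes "\<nu> \<ge> 0" shows "ev (fpoly \<nu> k) (nested_sqrt \<nu> k) = 0"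
proof (induct k)
  case 0 then show ?case by simp
next
  case (Suc k)
  have "of_int \<nu> + nested_sqrt \<nu> k \<ge> 0" using nested_nonneg[OF assms, of k] assms by simp
  then have "(sqrt (of_int \<nu> + nested_sqrt \<nu> k))^2 = of_int \<nu> + nested_sqrt \<nu> k" by simp
  then show ?case using Suc by (simp add: ev_pcompose power2_eq_square)
qed

lemma fpoly_degree: "degree (fpoly \<nu> k) = 2^k \<and> lead_coeff (fpoly \<nu> k) = 1"
proof (induct k)
  case 0 then show ?case by simp
next
  case (Suc k)
  have d: "degree [:-\<nu>,0,1::int:] = 2" by simp
  have dg: "degree (fpoly \<nu> (Suc k)) = 2^Suc k" using Suc by (simp add: degree_pcompose d)
  have A: "degree (fpoly \<nu> k) = 2^k" and B: "lead_coeff (fpoly \<nu> k) = 1" using Suc by auto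
  have "lead_coeff (fpoly \<nu> (Suc k)) = lead_coeff (fpoly \<nu> k) * lead_coeff [:-\<nu>,0,1::int:] ^ degree (fpoly \<nu> k)"
    using lead_coeff_comp[of "[:-\<nu>,0,1::int:]" "fpoly \<nu> k"] d by simp
  then have "lead_coeff (fpoly \<nu> (Suc k)) = 1" by (simp only: B) simp
  then show ?case using dg by simp
qed

lemma pow_mod2: "\<exists>t. (a + 2 * b) ^ m = a ^ m + 2 * (t :: 'a :: comm_ring_1)"
proof (induct m)
  case 0 then show ?case by (auto intro: exI[of _ 0])
next
  case (Suc m)
  then obtain t where t: "(a + 2 * b) ^ m = a ^ m + 2 * t" by blast
  show ?case
    apply (rule exI[of _ "a^m * b + t * a + 2 * t * b"])
    apply (simp only: power_Suc t)
    by (simp add: algebra_simps)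
qed

definition cc :: "int \<Rightarrow> nat \<Rightarrow> int" where "cc \<nu> k = (int k * \<nu>) mod 2"

lemma fpoly_mod2: "\<exists>q. fpoly \<nu> k = [:cc \<nu> k, 1:] ^ (2^k) + smult 2 q"
proof (induct k)
  case 0 then show ?case by (auto simp: cc_def intro: exI[of _ 0])
next
  case (Suc k)
  then obtain q where q: "fpoly \<nu> k = [:cc \<nu> k, 1:] ^ (2^k) + smult 2 q" by blast
  define c where "c = cc \<nu> k"
  define c' where "c' = cc \<nu> (Suc k)"
  have ev: "even (c - \<nu> - c'^2)" unfolding c_def c'_def cc_def
    apply (simp add: even_mod_2_iff algebra_simps) by blast
  define w where "w = (c - \<nu> - c'^2) div 2"
  have w: "c - \<nu> - c'^2 = 2 * w" using ev unfolding w_def by simp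
  define s where "s = [: w, -c' :]"
  have r: "pcompose [:c,1:] [:-\<nu>,0,1:] = [:c',1:]^2 + 2 * s"
  proof -
    have "pcompose [:c,1:] [:-\<nu>,0,1:] = [:c-\<nu>,0,1:]" by (simp add: pcompose_pCons)
    moreover have "[:c',1:]^2 + smult 2 s = [:c'^2 + 2*w, 0, 1:]" by (simp add: s_def power2_eq_square)
    moreover have "smult 2 s = 2 * s" by (simp add: numeral_poly)
    ultimately show ?thesis using w by (simp add: algebra_simps)
  qed
  obtain t where t: "([:c',1:]^2 + 2 * s) ^ (2^k) = ([:c',1:]^2) ^ (2^k) + 2 * t"
    using pow_mod2 by blast
  have "fpoly \<nu> (Suc k) = ([:c',1:]^2 + 2 * s) ^ (2^k) + smult 2 (pcompose q [:-\<nu>,0,1:])"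
    by (simp add: q pcompose_add pcompose_smult pcompose_power_left' c_def[symmetric] r)
  also have "\<dots> = ([:c',1:]^2)^(2^k) + 2 * t + smult 2 (pcompose q [:-\<nu>,0,1:])"
    by (simp only: t)
  also have "\<dots> = [:c',1:] ^ (2^Suc k) + smult 2 (t + pcompose q [:-\<nu>,0,1:])"
    by (simp add: power_mult[symmetric] numeral_poly smult_add_right)
  finally show ?case unfolding c'_def by blast
qed



lemma fpoly_mod4:
  assumes nu: "\<nu> mod 4 = 2 \<or> \<nu> mod 4 = 3" and k: "k \<ge> 1" and z: "even (z + int k * \<nu>)"
  shows "poly (fpoly \<nu> k) z mod 4 = 2"
  using k z
proof (induct k arbitrary: z)
  case 0 then show ?case by simp
next
  case (Suc k)
  show ?case
  proof (cases "k = 0")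
    case True
    have p: "poly (fpoly \<nu> (Suc k)) z = z^2 - \<nu>" using True by (simp add: poly_pcompose power2_eq_square)
    have ez: "even (z + \<nu>)" using Suc.prems True by simp
    obtain a where a: "\<nu> = 4 * a + (\<nu> mod 4)" by (metis mult.commute div_mult_mod_eq)
    from nu show ?thesis
    proof
      assume h: "\<nu> mod 4 = 2"
      then have "even z" using ez a by presburger
      then obtain b where b: "z = 2 * b" by (rule evenE)
      have "z^2 - \<nu> = 4 * (b^2 - a - 1) + 2" using a h b by (simp add: power2_eq_square algebra_simps)
      then show ?thesis using p by presburger
    next
      assume h: "\<nu> mod 4 = 3"
      then have "odd z" using ez a by presburger
      then obtain b where b: "z = 2 * b + 1" by (rule oddE)
      have "z^2 - \<nu> = 4 * (b^2 + b - a - 1) + 2" using a h b by (simp add: power2_eq_square algebra_simps)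
      then show ?thesis using p by presburger
    qed
  next
    case False
    have p: "poly (fpoly \<nu> (Suc k)) z = poly (fpoly \<nu> k) (z^2 - \<nu>)" by (simp add: poly_pcompose power2_eq_square)
    have "even (z^2 - \<nu> + int k * \<nu>)" using Suc.prems(2) apply (simp add: algebra_simps) by blast
    then show ?thesis using Suc.hyps[of "z^2 - \<nu>"] False p by simp
  qed
qed

lemma ev_sum: "degree p \<le> m \<Longrightarrow> ev p t = (\<Sum>i<Suc m. of_int (coeff p i) * t^i)"
proof (induct p arbitrary: m)
  case 0 then show ?case by simp
next
  case (pCons a p)
  show ?case
  proof (cases m)
    case 0
    then have "p = 0" using pCons by (auto split: if_splits)
    then show ?thesis using 0 by simp
  next
    case (Suc m')
    have "degree p \<le> m'" using pCons.prems Suc by (cases "p = 0") auto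
    then have ih: "ev p t = (\<Sum>i<Suc m'. of_int (coeff p i) * t^i)" by (rule pCons.hyps)
    show ?thesis unfolding Suc
      by (subst sum.lessThan_Suc_shift) (simp add: ih sum_distrib_left algebra_simps)
  qed
qed

lemma key_relation:
  assumes nu3: "\<nu> \<ge> 3" and nu: "\<nu> mod 4 = 2 \<or> \<nu> mod 4 = 3" and n: "n \<ge> 1"
  shows "\<exists>h::nat \<Rightarrow> int. odd (h 0) \<and>
     (nested_sqrt \<nu> n + of_int (cc \<nu> n)) ^ (2^n) =
       2 * (\<Sum>i<2^n. of_int (h i) * (nested_sqrt \<nu> n + of_int (cc \<nu> n)) ^ i)"
proof -
  define x where "x = nested_sqrt \<nu> n"
  define c where "c = cc \<nu> n"
  define y where "y = x + of_int c"
  define D :: nat where "D = 2^n"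
  have D1: "D \<ge> 1" unfolding D_def by simp
  obtain q where q: "fpoly \<nu> n = [:c, 1:] ^ D + smult 2 q" using fpoly_mod2 unfolding c_def D_def by blast
  have dq: "degree q \<le> D - 1"
  proof -
    have df: "degree (fpoly \<nu> n) = D" "coeff (fpoly \<nu> n) D = 1"
      using fpoly_degree[of \<nu> n] unfolding D_def by auto
    have dl: "degree ([:c, 1:] ^ D) = D" "coeff ([:c, 1:] ^ D) D = 1"
      by (simp_all add: degree_linear_power coeff_linear_power)
    have "\<forall>i>D-1. coeff (smult 2 q) i = 0"
    proof (intro allI impI)
      fix i assume "i > D - 1"
      then have "i \<ge> D" by simp
      have "coeff (smult 2 q) i = coeff (fpoly \<nu> n) i - coeff ([:c, 1:] ^ D) i"
        using q by simp
      also have "\<dots> = 0"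
      proof (cases "i = D")
        case True then show ?thesis using df dl by simp
      next
        case False
        then have "i > D" using \<open>i \<ge> D\<close> by simp
        then show ?thesis using df dl by (simp add: coeff_eq_0)
      qed
      finally show "coeff (smult 2 q) i = 0" .
    qed
    then have "degree (smult 2 q) \<le> D - 1" by (rule degree_le)
    then show ?thesis by simp
  qed
  define Q where "Q = pcompose q [:-c, 1:]"
  have dQ: "degree Q \<le> D - 1" using dq by (simp add: Q_def degree_pcompose)
  have root: "ev (fpoly \<nu> n) x = 0" unfolding x_def by (rule fpoly_root) (use nu3 in simp)
  have "ev (fpoly \<nu> n) x = y ^ D + 2 * ev q x"
    unfolding q y_def by (simp add: algebra_simps)
  then have yD: "y ^ D = - 2 * ev q x" using root by simp
  have "ev Q y = ev q x" unfolding Q_def by (simp add: ev_pcompose y_def)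
  also have "ev Q y = (\<Sum>i<Suc (D - 1). of_int (coeff Q i) * y^i)" by (rule ev_sum[OF dQ])
  finally have eqQ: "ev q x = (\<Sum>i<D. of_int (coeff Q i) * y^i)" using D1 by simp
  define h where "h i = - coeff Q i" for i
  have c0: "coeff Q 0 = poly q (-c)" unfolding Q_def by (simp add: pcompose_coeff_0)
  have "poly (fpoly \<nu> n) (-c) = 2 * poly q (-c)" unfolding q using D1 by (simp add: power_0_left)
  moreover have "poly (fpoly \<nu> n) (-c) mod 4 = 2"
    by (rule fpoly_mod4[OF nu n]) (simp add: c_def cc_def minus_mod_eq_mult_div[symmetric])
  ultimately have "odd (poly q (-c))" by presburger
  then have "odd (h 0)" unfolding h_def using c0 by simp
  moreover have "y ^ D = 2 * (\<Sum>i<D. of_int (h i) * y^i)"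
    unfolding yD eqQ h_def by (simp add: sum_negf[symmetric])
  ultimately show ?thesis unfolding y_def x_def c_def D_def by blast
qed



lemma rs_simps[simp]:
  "carrier (real_subring S) = S" "monoid.mult (real_subring S) = (*)" "one (real_subring S) = 1"
  "ring.zero (real_subring S) = 0" "ring.add (real_subring S) = (+)"
  by (simp_all add: real_subring_def)

locale rsub =
  fixes S :: "real set"
  assumes S0: "0 \<in> S" and S1: "1 \<in> S" and Sadd: "\<And>a b. a \<in> S \<Longrightarrow> b \<in> S \<Longrightarrow> a + b \<in> S"
    and Smul: "\<And>a b. a \<in> S \<Longrightarrow> b \<in> S \<Longrightarrow> a * b \<in> S"
    and Sneg: "\<And>a. a \<in> S \<Longrightarrow> - a \<in> S"
begin

lemma Spow: "a \<in> S \<Longrightarrow> a ^ k \<in> S"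
  by (induct k) (auto intro: S1 Smul)

lemma Sdiff: "a \<in> S \<Longrightarrow> b \<in> S \<Longrightarrow> a - b \<in> S"
  unfolding diff_conv_add_uminus by (rule Sadd[OF _ Sneg])

lemma is_cring: "cring (real_subring S)"
proof (rule cringI)
  show "abelian_group (real_subring S)"
    apply (rule abelian_groupI)
    subgoal by (simp add: Sadd)
    subgoal by (simp add: S0)
    subgoal by simp
    subgoal by simp
    subgoal by simp
    subgoal for x by (rule bexI[of _ "- x"]) (simp_all add: Sneg)
    done
  show "comm_monoid (real_subring S)"
    apply (rule comm_monoidI)
    subgoal by (simp add: Smul)
    subgoal by (simp add: S1)
    by simp_all
qed (simp add: algebra_simps)

lemma is_domain: "domain (real_subring S)"
  by (rule domainI[OF is_cring]) auto

lemma Units_rs: "Units (real_subring S) = {y \<in> S. y \<noteq> 0 \<and> 1 / y \<in> S}"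
proof -
  have "(\<exists>x\<in>S. x * y = 1 \<and> y * x = 1) \<longleftrightarrow> (y \<noteq> 0 \<and> 1 / y \<in> S)" for y :: real
  proof
    assume "\<exists>x\<in>S. x * y = 1 \<and> y * x = 1"
    then obtain x where "x \<in> S" "x * y = 1" by blast
    moreover from this have "y \<noteq> 0" by auto
    ultimately have "x = 1 / y" by (simp add: field_simps)
    then show "y \<noteq> 0 \<and> 1 / y \<in> S" using \<open>x \<in> S\<close> \<open>y \<noteq> 0\<close> by simp
  next
    assume "y \<noteq> 0 \<and> 1 / y \<in> S"
    then show "\<exists>x\<in>S. x * y = 1 \<and> y * x = 1" by (intro bexI[of _ "1/y"]) auto
  qed
  then show ?thesis unfolding Units_def by auto
qed

end

lemma DVR_crit:
  assumes "rsub L" and p: "p \<in> L" "p \<noteq> 0" "1 / p \<notin> L"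
    and val: "\<And>z. z \<in> L \<Longrightarrow> z \<noteq> 0 \<Longrightarrow> \<exists>k u. u \<in> L \<and> 1 / u \<in> L \<and> z = p ^ k * u"
  shows "DVR (real_subring L)"
proof -
  interpret rsub L by fact
  let ?R = "real_subring L"
  interpret domain ?R by (rule is_domain)
  have ideal_facts: "I \<subseteq> L" "0 \<in> I" "\<And>a x. a \<in> I \<Longrightarrow> x \<in> L \<Longrightarrow> x * a \<in> I"
     "\<And>a x. a \<in> I \<Longrightarrow> x \<in> L \<Longrightarrow> a * x \<in> I" if "ideal I ?R" for I
  proof -
    interpret ideal I ?R by fact
    show "I \<subseteq> L" using a_subset by simp
    show "0 \<in> I" using zero_closed by simp
    show "\<And>a x. a \<in> I \<Longrightarrow> x \<in> L \<Longrightarrow> x * a \<in> I" using I_l_closed by simp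
    show "\<And>a x. a \<in> I \<Longrightarrow> x \<in> L \<Longrightarrow> a * x \<in> I" using I_r_closed by simp
  qed
  have PIdl_eq: "PIdl\<^bsub>?R\<^esub> a = {x * a | x. x \<in> L}" for a by (simp add: cgenideal_def)
  have pd: "principal_domain ?R"
  proof (intro principal_domain.intro principal_domain_axioms.intro)
    show "domain ?R" by (rule is_domain)
    fix I assume I: "ideal I ?R"
    note IF = ideal_facts[OF I]
    show "\<exists>a\<in>carrier ?R. I = PIdl\<^bsub>?R\<^esub> a"
    proof (cases "I \<subseteq> {0}")
      case True
      then have "I = {0}" using IF by auto
      then show ?thesis using S0 by (auto simp: PIdl_eq intro!: bexI[of _ 0])
    next
      case False
      then obtain z where z: "z \<in> I" "z \<noteq> 0" by auto
      define K where "K = {k. \<exists>z\<in>I. z \<noteq> 0 \<and> (\<exists>u. u \<in> L \<and> 1 / u \<in> L \<and> z = p ^ k * u)}"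
      obtain k u where ku: "u \<in> L" "1 / u \<in> L" "z = p ^ k * u" using val[of z] z IF by auto
      have "k \<in> K" unfolding K_def using z ku by blast
      define k0 where "k0 = (LEAST k. k \<in> K)"
      have "k0 \<in> K" unfolding k0_def by (rule LeastI) fact
      then obtain z0 u0 where z0: "z0 \<in> I" "z0 \<noteq> 0" "u0 \<in> L" "1 / u0 \<in> L" "z0 = p ^ k0 * u0"
        unfolding K_def by blast
      have "z0 * (1 / u0) \<in> I" using IF(4)[OF z0(1) z0(4)] .
      moreover have "u0 \<noteq> 0" using z0 by auto
      ultimately have pk0: "p ^ k0 \<in> I" using z0(5) by simp
      have "I = {x * p ^ k0 | x. x \<in> L}"
      proof
        show "{x * p ^ k0 | x. x \<in> L} \<subseteq> I" using IF(3)[OF pk0] by auto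
        show "I \<subseteq> {x * p ^ k0 | x. x \<in> L}"
        proof
          fix w assume w: "w \<in> I"
          show "w \<in> {x * p ^ k0 | x. x \<in> L}"
          proof (cases "w = 0")
            case True then show ?thesis using S0 by auto
          next
            case False
            obtain m v where mv: "v \<in> L" "1 / v \<in> L" "w = p ^ m * v" using val[of w] w False IF by auto
            have "m \<in> K" unfolding K_def using w False mv by blast
            then have "k0 \<le> m" unfolding k0_def by (rule Least_le)
            then have "w = (p ^ (m - k0) * v) * p ^ k0" using mv(3)
              by (simp add: power_add[symmetric] algebra_simps)
            moreover have "p ^ (m - k0) * v \<in> L" using Smul[OF Spow[OF p(1)] mv(1)] .
            ultimately show ?thesis by blast
          qed
        qed
      qed
      then show ?thesis using Spow[OF p(1)] by (auto simp: PIdl_eq)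
    qed
  qed
  have nf: "\<not> field ?R"
  proof
    assume "field ?R"
    then have "Units ?R = carrier ?R - {\<zero>\<^bsub>?R\<^esub>}" by (rule field.field_Units)
    then have "p \<in> Units ?R" using p by simp
    then show False using p Units_rs by simp
  qed
  define M where "M = {x * p | x. x \<in> L}"
  have nonunit: "z \<in> M \<longleftrightarrow> (z \<in> L \<and> (z = 0 \<or> 1 / z \<notin> L))" for z
  proof
    assume "z \<in> M"
    then obtain x where x: "x \<in> L" "z = x * p" unfolding M_def by blast
    have "1 / z \<notin> L" if "z \<noteq> 0"
    proof
      assume "1 / z \<in> L"
      then have "x * (1 / z) \<in> L" using Smul x by blast
      moreover have "x * (1 / z) = 1 / p" using x that(1) by (auto simp: field_simps)
      ultimately show False using p(3) by simp
    qed
    moreover have "z \<in> L" using x Smul[OF x(1) p(1)] by simp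
    ultimately show "z \<in> L \<and> (z = 0 \<or> 1 / z \<notin> L)" by blast
  next
    assume h: "z \<in> L \<and> (z = 0 \<or> 1 / z \<notin> L)"
    show "z \<in> M"
    proof (cases "z = 0")
      case True then show ?thesis unfolding M_def using S0 by auto
    next
      case False
      then have nz: "1 / z \<notin> L" using h by simp
      obtain k u where ku: "u \<in> L" "1 / u \<in> L" "z = p ^ k * u" using val[of z] h False by auto
      show ?thesis
      proof (cases k)
        case 0 then show ?thesis using ku nz by simp
      next
        case (Suc j)
        then have "z = (p ^ j * u) * p" using ku by (simp add: algebra_simps)
        then show ?thesis unfolding M_def using Smul[OF Spow[OF p(1)] ku(1)] by blast
      qed
    qed
  qed
  have Mideal: "ideal M ?R" unfolding M_def
    using cring.cgenideal_ideal[OF is_cring, of p] p by (simp add: PIdl_eq)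
  have oneM: "1 \<notin> M" using nonunit[of 1] S1 by simp
  have unit_ideal: "J = L" if J: "ideal J ?R" and z: "z \<in> J" "z \<notin> M" for J z
  proof -
    note JF = ideal_facts[OF J]
    have zL: "z \<in> L" using z JF by auto
    have u: "z \<noteq> 0" "1 / z \<in> L" using nonunit[of z] z zL by auto
    show "J = L"
    proof
      show "J \<subseteq> L" by (rule JF(1))
      show "L \<subseteq> J"
      proof
        fix w assume "w \<in> L"
        then have "(w * (1 / z)) * z \<in> J" using JF(3)[OF z(1)] Smul u by blast
        then show "w \<in> J" using u by simp
      qed
    qed
  qed
  have Mmax: "maximalideal M ?R"
  proof (rule maximalidealI[OF Mideal])
    show "carrier ?R \<noteq> M" using oneM S1 by auto
    fix J assume J: "ideal J ?R" "M \<subseteq> J" "J \<subseteq> carrier ?R"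
    show "J = M \<or> J = carrier ?R"
    proof (cases "J \<subseteq> M")
      case True then show ?thesis using J by auto
    next
      case False
      then obtain z where "z \<in> J" "z \<notin> M" by auto
      then show ?thesis using unit_ideal[OF J(1)] by auto
    qed
  qed
  have uniq: "M' = M" if "maximalideal M' ?R" for M'
  proof -
    interpret mm: maximalideal M' ?R by fact
    have "M' \<subseteq> M"
    proof
      fix z assume "z \<in> M'"
      show "z \<in> M"
      proof (rule ccontr)
        assume "z \<notin> M"
        then have "M' = L" using unit_ideal[OF mm.is_ideal \<open>z \<in> M'\<close>] by simp
        then show False using mm.I_notcarr by simp
      qed
    qed
    moreover have "M \<subseteq> carrier ?R" using nonunit by auto
    ultimately have "M = M' \<or> M = carrier ?R" using mm.I_maximal[OF Mideal] by blast
    then show ?thesis using oneM S1 by auto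
  qed
  show ?thesis unfolding DVR_def using pd nf Mmax uniq by blast
qed



definition Tsum :: "nat \<Rightarrow> real \<Rightarrow> (nat \<Rightarrow> int) \<Rightarrow> real" where
  "Tsum D y e = (\<Sum>i<D. of_int (e i) * y ^ i)"

lemma Tsum_add: "Tsum D y e + Tsum D y f = Tsum D y (\<lambda>i. e i + f i)"
  by (simp add: Tsum_def sum.distrib[symmetric] algebra_simps)

lemma Tsum_scale: "of_int k * Tsum D y e = Tsum D y (\<lambda>i. k * e i)"
  by (simp add: Tsum_def sum_distrib_left algebra_simps)

lemma Tsum_shift: "Tsum (Suc m) y e = of_int (e 0) + y * Tsum m y (\<lambda>i. e (Suc i))"
  unfolding Tsum_def by (subst sum.lessThan_Suc_shift) (simp add: sum_distrib_left algebra_simps)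

lemma Tsum_const: "D \<ge> 1 \<Longrightarrow> of_int k = Tsum D y (\<lambda>i. if i = 0 then k else 0)"
proof (cases D)
  case (Suc m)
  show ?thesis unfolding Suc by (subst Tsum_shift) (simp add: Tsum_def)
qed simp

lemma Tsum_y:
  assumes yD: "y ^ D = 2 * Tsum D y h" and D: "D \<ge> 1"
  shows "y * Tsum D y e = Tsum D y (\<lambda>i. (if i = 0 then 0 else e (i - 1)) + 2 * e (D - 1) * h i)"
proof -
  obtain D' where D': "D = Suc D'" using D by (cases D) auto
  have "y * Tsum D y e = y * (\<Sum>i<D'. of_int (e i) * y ^ i) + of_int (e D') * y ^ D"
    unfolding Tsum_def D' by (simp add: algebra_simps)
  also have "y * (\<Sum>i<D'. of_int (e i) * y ^ i) = Tsum D y (\<lambda>i. if i = 0 then 0 else e (i - 1))"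
    unfolding D' Tsum_shift by (simp add: Tsum_def)
  also have "of_int (e D') * y ^ D = Tsum D y (\<lambda>i. 2 * e (D - 1) * h i)"
    unfolding yD using Tsum_scale[of "2 * e D'" D y h] by (simp add: D' algebra_simps)
  finally show ?thesis by (simp add: Tsum_add)
qed

lemma Tsum_rep:
  assumes yD: "y ^ D = 2 * Tsum D y h" and D: "D \<ge> 1"
  shows "\<exists>e. ev p (y - of_int c) = Tsum D y e"
proof (induct p)
  case 0
  show ?case using Tsum_const[OF D, of 0 y] by auto
next
  case (pCons a p)
  then obtain e where e: "ev p (y - of_int c) = Tsum D y e" by blast
  have "ev (pCons a p) (y - of_int c) = of_int a + y * Tsum D y e + of_int (- c) * Tsum D y e"
    by (simp add: e algebra_simps)
  then show ?case
    unfolding Tsum_y[OF yD D] Tsum_scale Tsum_const[OF D, of a y] Tsum_add by blast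
qed

lemma (in rsub) Ssum: "(\<And>i. i \<in> I \<Longrightarrow> f i \<in> S) \<Longrightarrow> sum f I \<in> S"
  by (induct I rule: infinite_finite_induct) (auto intro: S0 Sadd)

lemma (in rsub) Sint: "(\<And>k. of_int k \<in> S) \<Longrightarrow> y \<in> S \<Longrightarrow> Tsum D y e \<in> S"
  unfolding Tsum_def by (intro Ssum Smul Spow) auto



lemma half_le: "even a \<Longrightarrow> nat \<bar>a div 2\<bar> \<le> nat \<bar>a::int\<bar>" by (elim evenE) auto
lemma half_less: "even a \<Longrightarrow> a \<noteq> 0 \<Longrightarrow> nat \<bar>a div 2\<bar> < nat \<bar>a::int\<bar>" by (elim evenE) auto

theorem lemma4p4:
  fixes \<nu> :: int and n :: nat and P :: "real set"
  assumes "\<nu> \<ge> 3" and "squarefree \<nu>" and "\<nu> mod 4 = 2 \<or> \<nu> mod 4 = 3"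
    and "n \<ge> 1"
    and "maximalideal P (real_subring (int_adjoin (nested_sqrt \<nu> n)))"
    and "P \<inter> \<int> = {of_int (2 * k) | k :: int. True}"
  shows "DVR (real_subring (localization_at (int_adjoin (nested_sqrt \<nu> n)) P))"
proof -
  define x where "x = nested_sqrt \<nu> n"
  define A where "A = int_adjoin x"
  define c where "c = cc \<nu> n"
  define y where "y = x + of_int c"
  define D :: nat where "D = 2^n"
  define L where "L = localization_at A P"
  have D1: "D \<ge> 1" unfolding D_def by simp
  obtain h where h0: "odd (h 0)" and yD: "y^D = 2 * Tsum D y h"
    using key_relation[OF assms(1) assms(3) assms(4)]
    unfolding Tsum_def x_def[symmetric] c_def[symmetric] y_def[symmetric] D_def[symmetric] by blast
  have Amem: "a \<in> A \<longleftrightarrow> (\<exists>p. a = ev p x)" for a unfolding A_def int_adjoin_def ev_def by simp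
  have rA: "rsub A"
  proof
    show "0 \<in> A" unfolding Amem by (rule exI[of _ 0]) simp
    show "1 \<in> A" unfolding Amem by (rule exI[of _ 1]) simp
    show "a + b \<in> A" if "a \<in> A" "b \<in> A" for a b using that unfolding Amem by (metis ev_add)
    show "a * b \<in> A" if "a \<in> A" "b \<in> A" for a b using that unfolding Amem by (metis ev_mult)
    show "- a \<in> A" if "a \<in> A" for a using that unfolding Amem by (metis ev_uminus)
  qed
  interpret rA: rsub A by (rule rA)
  have Aint: "of_int k \<in> A" for k unfolding Amem by (rule exI[of _ "[:k:]"]) simp
  have xA: "x \<in> A" unfolding Amem by (rule exI[of _ "[:0,1:]"]) simp
  have yA: "y \<in> A" unfolding y_def using xA Aint by (rule rA.Sadd)
  have TA: "Tsum m y e \<in> A" for m e using Aint yA by (rule rA.Sint)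
  let ?R = "real_subring A"
  interpret MP: maximalideal P ?R using assms(5) unfolding A_def x_def .
  have PA: "P \<subseteq> A" using MP.a_subset by simp
  have P0: "0 \<in> P" using additive_subgroup.zero_closed[OF MP.is_additive_subgroup] by simp
  have Padd: "a \<in> P \<Longrightarrow> b \<in> P \<Longrightarrow> a + b \<in> P" for a b using additive_subgroup.a_closed[OF MP.is_additive_subgroup] by simp
  have Pmul: "a \<in> P \<Longrightarrow> b \<in> A \<Longrightarrow> b * a \<in> P" for a b using MP.I_l_closed by simp
  have prime: "a \<in> A \<Longrightarrow> b \<in> A \<Longrightarrow> a * b \<in> P \<Longrightarrow> a \<in> P \<or> b \<in> P" for a b
  proof -
    assume "a \<in> A" "b \<in> A" "a * b \<in> P"
    have "primeideal P ?R"
      by (rule cring.maximalideal_prime[OF rA.is_cring]) (use assms(5) in \<open>simp add: A_def x_def\<close>)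
    then show ?thesis using primeideal.I_prime[of P ?R a b] \<open>a \<in> A\<close> \<open>b \<in> A\<close> \<open>a * b \<in> P\<close> by simp
  qed
  have Pint: "of_int k \<in> P \<longleftrightarrow> even k" for k
  proof -
    have "of_int k \<in> P \<longleftrightarrow> (of_int k :: real) \<in> P \<inter> \<int>" by simp
    also have "\<dots> \<longleftrightarrow> (\<exists>j::int. (of_int k :: real) = of_int (2 * j))" using assms(6) by auto
    also have "\<dots> \<longleftrightarrow> even k" by (metis evenE dvd_triv_left of_int_eq_iff)
    finally show ?thesis .
  qed
  have one_notP: "1 \<notin> P" using Pint[of 1] by simp
  have Pneg: "a \<in> P \<Longrightarrow> - a \<in> P" for a using Pmul[of a "-1"] rA.Sneg[OF rA.S1] by simp
  have nzP: "s \<notin> P \<Longrightarrow> s \<noteq> 0" for s using P0 by auto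
  have yP: "y \<in> P"
  proof -
    have "y ^ D \<in> P" unfolding yD using Pmul[of 2 "Tsum D y h"] Pint[of 2] TA by (simp add: mult.commute)
    moreover have "y ^ m \<in> P \<Longrightarrow> m \<ge> 1 \<Longrightarrow> y \<in> P" for m
    proof (induct m)
      case 0 then show ?case by simp
    next
      case (Suc m)
      show ?case
      proof (cases "m = 0")
        case True then show ?thesis using Suc by simp
      next
        case False
        have "y \<in> P \<or> y ^ m \<in> P" using prime[OF yA rA.Spow[OF yA]] Suc.prems by simp
        then show ?thesis using Suc.hyps False by auto
      qed
    qed
    ultimately show ?thesis using D1 by blast
  qed
  have Lmem: "z \<in> L \<longleftrightarrow> (\<exists>a s. a \<in> A \<and> s \<in> A \<and> s \<notin> P \<and> z = a / s)" for z
    unfolding L_def localization_at_def by auto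
  have rL: "rsub L"
  proof
    show "0 \<in> L" unfolding Lmem using rA.S0 rA.S1 one_notP by (intro exI[of _ 0] exI[of _ 1]) simp
    show "1 \<in> L" unfolding Lmem using rA.S0 rA.S1 one_notP by (intro exI[of _ 1] exI[of _ 1]) simp
    show "a + b \<in> L" if ab: "a \<in> L" "b \<in> L" for a b
    proof -
      obtain a1 s where 1: "a1 \<in> A" "s \<in> A" "s \<notin> P" "a = a1 / s" using ab(1) Lmem by auto
      obtain b1 t where 2: "b1 \<in> A" "t \<in> A" "t \<notin> P" "b = b1 / t" using ab(2) Lmem by auto
      have st: "s * t \<notin> P" using prime 1 2 by blast
      have "a + b = (a1 * t + b1 * s) / (s * t)" using 1 2 nzP by (simp add: field_simps)
      then show ?thesis unfolding Lmem using st 1 2 by (intro exI[of _ "a1 * t + b1 * s"] exI[of _ "s * t"]) (auto intro: rA.Sadd rA.Smul)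
    qed
    show "a * b \<in> L" if ab: "a \<in> L" "b \<in> L" for a b
    proof -
      obtain a1 s where 1: "a1 \<in> A" "s \<in> A" "s \<notin> P" "a = a1 / s" using ab(1) Lmem by auto
      obtain b1 t where 2: "b1 \<in> A" "t \<in> A" "t \<notin> P" "b = b1 / t" using ab(2) Lmem by auto
      have st: "s * t \<notin> P" using prime 1 2 by blast
      have "a * b = (a1 * b1) / (s * t)" using 1 2 by simp
      then show ?thesis unfolding Lmem using st 1 2 by (intro exI[of _ "a1 * b1"] exI[of _ "s * t"]) (auto intro: rA.Smul)
    qed
    show "- a \<in> L" if ab: "a \<in> L" for a
    proof -
      obtain a1 s where 1: "a1 \<in> A" "s \<in> A" "s \<notin> P" "a = a1 / s" using ab(1) Lmem by auto
      then show ?thesis unfolding Lmem by (intro exI[of _ "- a1"] exI[of _ s]) (auto intro: rA.Sneg)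
    qed
  qed
  interpret rL: rsub L by (rule rL)
  have AL: "a \<in> A \<Longrightarrow> a \<in> L" for a unfolding Lmem using rA.S1 one_notP by (intro exI[of _ a] exI[of _ 1]) simp
  have invL: "s \<in> A \<Longrightarrow> s \<notin> P \<Longrightarrow> 1 / s \<in> L" for s unfolding Lmem using rA.S1 by blast
  have unit_char: "\<exists>a s. a \<in> A \<and> a \<notin> P \<and> s \<in> A \<and> s \<notin> P \<and> z = a / s"
    if z: "z \<in> L" "z \<noteq> 0" "1 / z \<in> L" for z
  proof -
    obtain a s where 1: "a \<in> A" "s \<in> A" "s \<notin> P" "z = a / s" using z(1) Lmem by auto
    obtain b t where 2: "b \<in> A" "t \<in> A" "t \<notin> P" "1 / z = b / t" using z(3) Lmem by auto
    have "a \<noteq> 0" using 1 z(2) by auto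
    have "a * b = s * t" using 1 2 nzP[of s] nzP[of t] \<open>a \<noteq> 0\<close> by (auto simp: field_simps)
    moreover have "s * t \<notin> P" using prime 1 2 by blast
    ultimately have "a \<notin> P" using Pmul[of a b] 2(1) by (auto simp: mult.commute)
    then show ?thesis using 1 by blast
  qed
  have unit2: "u + y * w \<noteq> 0 \<and> 1 / (u + y * w) \<in> L"
    if u: "u \<in> L" "u \<noteq> 0" "1 / u \<in> L" and w: "w \<in> L" for u w
  proof -
    obtain a s where 1: "a \<in> A" "a \<notin> P" "s \<in> A" "s \<notin> P" "u = a / s" using unit_char[OF u] by blast
    obtain e r where 2: "e \<in> A" "r \<in> A" "r \<notin> P" "w = e / r" using w Lmem by auto
    define N where "N = a * r + y * e * s"
    have NA: "N \<in> A" unfolding N_def using 1 2 yA by (intro rA.Sadd rA.Smul)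
    have ar: "a * r \<notin> P" using prime 1 2 by blast
    have yes: "y * e * s \<in> P" using Pmul[OF yP, of "e * s"] 1 2 rA.Smul by (simp add: algebra_simps)
    have NP: "N \<notin> P"
    proof
      assume "N \<in> P"
      then have "N + - (y * e * s) \<in> P" using Padd Pneg yes by blast
      then show False using ar unfolding N_def by simp
    qed
    have sr: "s * r \<notin> P" using prime 1 2 by blast
    have eq: "u + y * w = N / (s * r)" unfolding N_def using 1 2 nzP[of s] nzP[of r] by (simp add: field_simps)
    have "(s * r) / N \<in> L" unfolding Lmem using NA NP 1 2 rA.Smul[of s r]
      by (intro exI[of _ "s * r"] exI[of _ N]) simp
    then show ?thesis unfolding eq using nzP[OF NP] nzP[OF sr] by simp
  qed
  have intunit: "of_int k \<in> L \<and> (of_int k :: real) \<noteq> 0 \<and> 1 / of_int k \<in> L" if "odd k" for k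
    using that Pint[of k] invL[of "of_int k"] AL[OF Aint] Aint by auto
  define H where "H = Tsum D y h"
  have Hunit: "H \<in> L \<and> H \<noteq> 0 \<and> 1 / H \<in> L"
  proof -
    obtain D' where D': "D = Suc D'" using D1 by (cases D) auto
    have "H = of_int (h 0) + y * Tsum D' y (\<lambda>i. h (Suc i))" unfolding H_def D' by (rule Tsum_shift)
    then show ?thesis using unit2[of "of_int (h 0)" "Tsum D' y (\<lambda>i. h (Suc i))"] intunit[OF h0] AL[OF TA]
      AL[OF TA[of D h]] by (simp add: H_def)
  qed
  have two: "2 = y ^ D * (1 / H)" using yD Hunit unfolding H_def by simp
  have OddCase: "\<exists>k u. k < m \<and> u \<in> L \<and> u \<noteq> 0 \<and> 1 / u \<in> L \<and> Tsum m y e = y ^ k * u"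
    if "m \<le> D" "\<exists>i<m. odd (e i)" for m e
    using that
  proof (induct m arbitrary: e)
    case 0 then show ?case by simp
  next
    case (Suc m)
    define T' where "T' = Tsum m y (\<lambda>i. e (Suc i))"
    have T'L: "T' \<in> L" unfolding T'_def by (rule AL[OF TA])
    have Teq: "Tsum (Suc m) y e = of_int (e 0) + y * T'" unfolding T'_def by (rule Tsum_shift)
    show ?case
    proof (cases "odd (e 0)")
      case True
      have "of_int (e 0) + y * T' \<noteq> 0 \<and> 1 / (of_int (e 0) + y * T') \<in> L"
        using unit2[of "of_int (e 0)" T'] intunit[OF True] T'L by blast
      moreover have "of_int (e 0) + y * T' \<in> L" using intunit[OF True] T'L yA AL by (intro rL.Sadd rL.Smul) auto
      ultimately show ?thesis unfolding Teq by (intro exI[of _ 0] exI[of _ "of_int (e 0) + y * T'"]) simp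
    next
      case False
      then obtain f where f: "e 0 = 2 * f" by (auto elim: evenE)
      from Suc.prems(2) obtain i where i: "i < Suc m" "odd (e i)" by blast
      have "i \<noteq> 0" using False i(2) by (cases "i = 0") auto
      then have "\<exists>i<m. odd (e (Suc i))" using i by (intro exI[of _ "i - 1"]) auto
      then obtain k u where ku: "k < m" "u \<in> L" "u \<noteq> 0" "1 / u \<in> L" "T' = y ^ k * u"
        using Suc.hyps[of "\<lambda>i. e (Suc i)"] Suc.prems(1) unfolding T'_def by auto
      define w where "w = y ^ (D - k - 2) * (1 / H) * of_int f"
      have wL: "w \<in> L" unfolding w_def using Hunit AL[OF yA] AL[OF Aint]
        by (intro rL.Smul rL.Spow) auto
      have u2: "u + y * w \<noteq> 0 \<and> 1 / (u + y * w) \<in> L" using unit2[OF ku(2-4) wL] .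
      have u2L: "u + y * w \<in> L" using ku(2) wL AL[OF yA] by (intro rL.Sadd rL.Smul)
      have Dk: "D = Suc k + Suc (D - k - 2)" using Suc.prems(1) ku(1) by simp
      have yDk: "y ^ D = y ^ Suc k * (y * y ^ (D - k - 2))"
        by (subst Dk, subst power_add) simp
      have "of_int (e 0) = y ^ D * (1 / H) * of_int f" unfolding f using two by simp
      then have "Tsum (Suc m) y e = y ^ Suc k * (u + y * w)"
        unfolding Teq ku(5) w_def yDk by (simp add: algebra_simps)
      then show ?thesis using u2 u2L ku(1) by (intro exI[of _ "Suc k"] exI[of _ "u + y * w"]) simp
    qed
  qed
  have MainVal: "\<exists>k u. u \<in> L \<and> u \<noteq> 0 \<and> 1 / u \<in> L \<and> Tsum D y e = y ^ k * u"
    if "Tsum D y e \<noteq> 0" for e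
    using that
  proof (induct e rule: measure_induct_rule[of "\<lambda>e. \<Sum>i<D. nat \<bar>e i\<bar>"])
    case (less e)
    show ?case
    proof (cases "\<exists>i<D. odd (e i)")
      case True then show ?thesis using OddCase[of D e] by auto
    next
      case False
      define e' where "e' i = e i div 2" for i
      have "of_int 2 * Tsum D y e' = Tsum D y (\<lambda>i. 2 * e' i)" by (rule Tsum_scale)
      also have "\<dots> = Tsum D y e" unfolding Tsum_def e'_def using False by (intro sum.cong) auto
      finally have Te: "Tsum D y e = 2 * Tsum D y e'" by simp
      then have ne: "Tsum D y e' \<noteq> 0" using less.prems by auto
      have "\<exists>i<D. e i \<noteq> 0"
      proof (rule ccontr)
        assume "\<not> ?thesis"
        then have "Tsum D y e = 0" unfolding Tsum_def by simp
        then show False using less.prems by simp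
      qed
      then have "(\<Sum>i<D. nat \<bar>e' i\<bar>) < (\<Sum>i<D. nat \<bar>e i\<bar>)"
        using False half_le half_less unfolding e'_def by (intro sum_strict_mono_ex1) auto
      then obtain k u where ku: "u \<in> L" "u \<noteq> 0" "1 / u \<in> L" "Tsum D y e' = y ^ k * u"
        using less.hyps ne by blast
      have "Tsum D y e = y ^ (D + k) * (u * (1 / H))" unfolding Te ku(4) two by (simp add: power_add)
      moreover have "u * (1 / H) \<in> L" using ku Hunit by (intro rL.Smul) auto
      moreover have "1 / (u * (1 / H)) \<in> L" using ku Hunit rL.Smul[of H "1 / u"] by simp
      ultimately show ?thesis using ku Hunit by (intro exI[of _ "D + k"] exI[of _ "u * (1 / H)"]) simp
    qed
  qed
  have val: "\<exists>k u. u \<in> L \<and> 1 / u \<in> L \<and> z = y ^ k * u" if z: "z \<in> L" "z \<noteq> 0" for z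
  proof -
    obtain a s where 1: "a \<in> A" "s \<in> A" "s \<notin> P" "z = a / s" using z(1) Lmem by auto
    obtain p where p: "a = ev p x" using 1 Amem by auto
    have "x = y - of_int c" unfolding y_def by simp
    then obtain e where e: "a = Tsum D y e" using Tsum_rep[OF yD[unfolded H_def] D1, of p c] p by auto
    have "a \<noteq> 0" using z 1 by auto
    then obtain k u where ku: "u \<in> L" "u \<noteq> 0" "1 / u \<in> L" "a = y ^ k * u" using MainVal e by blast
    have "z = y ^ k * (u * (1 / s))" using 1 ku by simp
    moreover have "u * (1 / s) \<in> L" using ku invL 1 by (intro rL.Smul) auto
    moreover have "1 / (u * (1 / s)) \<in> L" using ku rL.Smul[of s "1/u"] AL 1 by simp
    ultimately show ?thesis by blast
  qed
  have ypos: "y > 0"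
  proof -
    obtain m where m: "n = Suc m" using assms(4) by (cases n) auto
    have "nested_sqrt \<nu> m \<ge> 0" using nested_nonneg[of \<nu> m] assms(1) by simp
    then have "x > 0" unfolding x_def m using assms(1) by simp
    moreover have "c \<ge> 0" unfolding c_def cc_def by simp
    ultimately show ?thesis unfolding y_def by simp
  qed
  have yinv: "1 / y \<notin> L"
  proof
    assume "1 / y \<in> L"
    then obtain a s where 1: "a \<in> A" "s \<in> A" "s \<notin> P" "1 / y = a / s" using Lmem by auto
    then have "s = a * y" using ypos nzP[of s] by (auto simp: field_simps)
    then have "s \<in> P" using Pmul[OF yP 1(1)] by simp
    then show False using 1 by simp
  qed
  have "DVR (real_subring L)"
    by (rule DVR_crit[OF rL AL[OF yA] _ yinv val]) (use ypos in auto)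
  then show ?thesis unfolding L_def A_def x_def .
qed

end
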